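(* Let $\mathcal T$ be an admissible tree. Then: (i) every inner edge incident to a white-empty vertex is of type $(q_\circ=2:q_\bullet=1)$; (ii) every NHP inner edge $e$, joining a black-occupied vertex $v$ to a white-occupied vertex $w$, is of type $(q_\circ=-1:q_\bullet=4)$, the two other edges at $v$ are inner edges to white-empty vertices, one of the other two edges at $w$ joins $w$ to a black-empty vertex carrying two buds, and the remaining edge at $w$ is either a leaf or an inner edge to a black-empty vertex; (iii) every inner edge joining a black-empty vertex to a white-occupied vertex is of type $(2:1)$ or $(5:-2)$, and in the latter case the black-empty vertex carries two buds and the white-occupied vertex is incident to exactly one NHP inner edge.
   Context: A blossom tree is a plane tree whose inner vertices are black or white, all of degree 3, whose inner edges join black to white inner vertices, and whose degree-one ends are buds (attached to black inner vertices, charge $-1$) or leaves (attached to white inner vertices, charge $+1$), with total charge $3$. Removing an inner edge $e$ splits the tree into two parts; $q_\circ$ (resp. $q_\bullet$) is the total charge of the part containing the white (resp. black) endpoint; $e$ is of type $(q_\circ:q_\bullet)$, and is regular if $q_\circ\ge0$ and $q_\bullet\le1$. Each inner vertex is empty or occupied by a particle; an inner edge is HP if at most one endpoint is occupied, NHP if both are. An admissible tree is such a tree in which every HP inner edge is regular and every NHP inner edge is non-regular. *)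

theory Defs
  imports Main
begin

text \<open>A blossom tree (plane embedding ignored: it plays no role in the statement).
  V: inner vertices; black v: colour (otherwise white);
  E: inner edges, each stored as (white endpoint, black endpoint);
  pend v: number of degree-one ends attached at v (buds if v is black, leaves if white);
  occ v: v is occupied by a particle.\<close>

definition adj :: "('v \<times> 'v) set \<Rightarrow> 'v \<Rightarrow> 'v \<Rightarrow> bool" where
  "adj F x y \<longleftrightarrow> (x, y) \<in> F \<or> (y, x) \<in> F"

definition vcharge :: "('v \<Rightarrow> bool) \<Rightarrow> ('v \<Rightarrow> nat) \<Rightarrow> 'v \<Rightarrow> int" where
  "vcharge black pend v = (if black v then - int (pend v) else int (pend v))"

definition charge :: "('v \<Rightarrow> bool) \<Rightarrow> ('v \<Rightarrow> nat) \<Rightarrow> 'v set \<Rightarrow> int" where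
  "charge black pend S = (\<Sum>v\<in>S. vcharge black pend v)"

definition comp :: "'v set \<Rightarrow> ('v \<times> 'v) set \<Rightarrow> 'v \<Rightarrow> 'v set" where
  "comp V F x = {y \<in> V. (adj F)\<^sup>*\<^sup>* x y}"

definition blossom_tree ::
  "'v set \<Rightarrow> ('v \<times> 'v) set \<Rightarrow> ('v \<Rightarrow> bool) \<Rightarrow> ('v \<Rightarrow> nat) \<Rightarrow> bool" where
  "blossom_tree V E black pend \<longleftrightarrow>
     finite V \<and> V \<noteq> {} \<and>
     E \<subseteq> {(w, b). w \<in> V \<and> b \<in> V \<and> \<not> black w \<and> black b} \<and>
     (\<forall>x\<in>V. \<forall>y\<in>V. (adj E)\<^sup>*\<^sup>* x y) \<and>
     card E + 1 = card V \<and>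
     (\<forall>v\<in>V. card {e \<in> E. fst e = v \<or> snd e = v} + pend v = 3) \<and>
     charge black pend V = 3"

definition q_white :: "'v set \<Rightarrow> ('v \<times> 'v) set \<Rightarrow> ('v \<Rightarrow> bool) \<Rightarrow> ('v \<Rightarrow> nat) \<Rightarrow> 'v \<times> 'v \<Rightarrow> int" where
  "q_white V E black pend e = charge black pend (comp V (E - {e}) (fst e))"

definition q_black :: "'v set \<Rightarrow> ('v \<times> 'v) set \<Rightarrow> ('v \<Rightarrow> bool) \<Rightarrow> ('v \<Rightarrow> nat) \<Rightarrow> 'v \<times> 'v \<Rightarrow> int" where
  "q_black V E black pend e = charge black pend (comp V (E - {e}) (snd e))"

definition regular :: "'v set \<Rightarrow> ('v \<times> 'v) set \<Rightarrow> ('v \<Rightarrow> bool) \<Rightarrow> ('v \<Rightarrow> nat) \<Rightarrow> 'v \<times> 'v \<Rightarrow> bool" where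
  "regular V E black pend e \<longleftrightarrow> q_white V E black pend e \<ge> 0 \<and> q_black V E black pend e \<le> 1"

definition NHP :: "('v \<Rightarrow> bool) \<Rightarrow> 'v \<times> 'v \<Rightarrow> bool" where
  "NHP occ e \<longleftrightarrow> occ (fst e) \<and> occ (snd e)"

definition HP :: "('v \<Rightarrow> bool) \<Rightarrow> 'v \<times> 'v \<Rightarrow> bool" where
  "HP occ e \<longleftrightarrow> \<not> NHP occ e"

definition admissible ::
  "'v set \<Rightarrow> ('v \<times> 'v) set \<Rightarrow> ('v \<Rightarrow> bool) \<Rightarrow> ('v \<Rightarrow> nat) \<Rightarrow> ('v \<Rightarrow> bool) \<Rightarrow> bool" where
  "admissible V E black pend occ \<longleftrightarrow>
     blossom_tree V E black pend \<and>
     (\<forall>e\<in>E. HP occ e \<longrightarrow> regular V E black pend e) \<and>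
     (\<forall>e\<in>E. NHP occ e \<longrightarrow> \<not> regular V E black pend e)"

end

theory Submission
  imports Defs
begin

lemma adj_sym: "adj F x y = adj F y x" by (auto simp: adj_def)

lemma rt_sym: "(adj F)\<^sup>*\<^sup>* x y \<Longrightarrow> (adj F)\<^sup>*\<^sup>* y x"
proof (induction rule: rtranclp_induct)
  case base then show ?case by simp
next
  case (step u v)
  then show ?case by (metis adj_sym converse_rtranclp_into_rtranclp)
qed


lemma rt_mono: assumes "F \<subseteq> G" shows "(adj F)\<^sup>*\<^sup>* x y \<Longrightarrow> (adj G)\<^sup>*\<^sup>* x y"
proof (induction rule: rtranclp_induct)
  case base then show ?case by simp
next
  case (step u v)
  then have "adj G u v" using assms by (auto simp: adj_def)
  then show ?case using step by (meson rtranclp.rtrancl_into_rtrancl)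
qed

lemma rt_in: assumes "F \<subseteq> S \<times> S" "x \<in> S" shows "(adj F)\<^sup>*\<^sup>* x y \<Longrightarrow> y \<in> S"
proof (induction rule: rtranclp_induct)
  case base then show ?case using assms by simp
next
  case (step u v) then show ?case using assms by (auto simp: adj_def)
qed

lemma rt_empty: "(adj {})\<^sup>*\<^sup>* x y \<Longrightarrow> x = y"
  by (induction rule: rtranclp_induct) (auto simp: adj_def)

lemma split_path:
  "(adj F)\<^sup>*\<^sup>* x z \<Longrightarrow> (adj (F - {(x,y),(y,x)}))\<^sup>*\<^sup>* x z \<or> (adj (F - {(x,y),(y,x)}))\<^sup>*\<^sup>* y z"
proof (induction rule: rtranclp_induct)
  case base then show ?case by simp
next
  case (step u v)
  show ?case
  proof (cases "adj (F - {(x,y),(y,x)}) u v")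
    case True
    then show ?thesis using step.IH by (meson rtranclp.rtrancl_into_rtrancl)
  next
    case False
    then have "v = x \<or> v = y" using step.hyps(2) by (auto simp: adj_def)
    then show ?thesis by auto
  qed
qed

lemma avoid_path:
  "(adj F)\<^sup>*\<^sup>* a u \<Longrightarrow> (adj (F - {(p,q),(q,p)}))\<^sup>*\<^sup>* a u \<or> (adj F)\<^sup>*\<^sup>* a p \<or> (adj F)\<^sup>*\<^sup>* a q"
proof (induction rule: rtranclp_induct)
  case base then show ?case by simp
next
  case (step u v)
  show ?case
  proof (cases "(adj (F - {(p,q),(q,p)}))\<^sup>*\<^sup>* a u")
    case True
    show ?thesis
    proof (cases "adj (F - {(p,q),(q,p)}) u v")
      case True
      then show ?thesis using \<open>(adj (F - {(p,q),(q,p)}))\<^sup>*\<^sup>* a u\<close>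
        by (meson rtranclp.rtrancl_into_rtrancl)
    next
      case False
      then have "u = p \<or> u = q" using step.hyps(2) by (auto simp: adj_def)
      then show ?thesis using step.hyps(1) by auto
    qed
  next
    case False then show ?thesis using step.IH by auto
  qed
qed

lemma restrict_path:
  assumes "F \<subseteq> S \<times> S" "x \<in> S"
  shows "(adj F)\<^sup>*\<^sup>* x z \<Longrightarrow>
    (adj (F \<inter> ({w\<in>S. (adj F)\<^sup>*\<^sup>* x w} \<times> {w\<in>S. (adj F)\<^sup>*\<^sup>* x w})))\<^sup>*\<^sup>* x z"
proof (induction rule: rtranclp_induct)
  case base then show ?case by simp
next
  case (step u v)
  have uS: "u \<in> S" using rt_in[OF assms] step.hyps(1) .
  have vS: "v \<in> S" using rt_in[OF assms] step.hyps(1,2) by (meson rtranclp.rtrancl_into_rtrancl)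
  have "(adj F)\<^sup>*\<^sup>* x v" using step.hyps by (meson rtranclp.rtrancl_into_rtrancl)
  moreover have "(u,v) \<in> F \<or> (v,u) \<in> F" using step.hyps(2) by (simp add: adj_def)
  ultimately have "adj (F \<inter> ({w\<in>S. (adj F)\<^sup>*\<^sup>* x w} \<times> {w\<in>S. (adj F)\<^sup>*\<^sup>* x w})) u v"
    using step.hyps(1) uS vS unfolding adj_def by blast
  then show ?case using step.IH by (meson rtranclp.rtrancl_into_rtrancl)
qed

lemma conn_card:
  "finite S \<Longrightarrow> F \<subseteq> S \<times> S \<Longrightarrow> \<forall>x\<in>S. \<forall>y\<in>S. (adj F)\<^sup>*\<^sup>* x y \<Longrightarrow> card S \<le> card F + 1"
proof (induction "card F" arbitrary: F S rule: less_induct)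
  case less
  have "finite (S \<times> S)" using less.prems(1) by simp
  then have finF: "finite F" using less.prems(2) finite_subset by blast
  show ?case
  proof (cases "F = {}")
    case True
    have "\<forall>x\<in>S. \<forall>y\<in>S. x = y"
    proof (intro ballI)
      fix a b assume "a \<in> S" "b \<in> S"
      then have "(adj {})\<^sup>*\<^sup>* a b" using less.prems(3) True by simp
      then show "a = b" by (rule rt_empty)
    qed
    then have "card S \<le> 1" using less.prems(1) by (simp add: card_le_Suc0_iff_eq)
    then show ?thesis by simp
  next
    case False
    then obtain x y where e: "(x,y) \<in> F" by auto
    have xS: "x \<in> S" and yS: "y \<in> S" using e less.prems(2) by auto
    define R where "R = F - {(x,y),(y,x)}"
    have RS: "R \<subseteq> S \<times> S" using less.prems(2) R_def by auto
    have RF: "R \<subset> F" using e R_def by auto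
    have cR: "card R < card F" using RF finF psubset_card_mono by blast
    define A where "A = {w\<in>S. (adj R)\<^sup>*\<^sup>* x w}"
    define B where "B = {w\<in>S. (adj R)\<^sup>*\<^sup>* y w}"
    define FA where "FA = R \<inter> (A \<times> A)"
    define FB where "FB = R \<inter> (B \<times> B)"
    have SAB: "S = A \<union> B"
    proof
      show "S \<subseteq> A \<union> B"
      proof
        fix z assume "z \<in> S"
        then have "(adj F)\<^sup>*\<^sup>* x z" using less.prems(3) xS by blast
        then have "(adj R)\<^sup>*\<^sup>* x z \<or> (adj R)\<^sup>*\<^sup>* y z" using split_path[of F x z y]
          unfolding R_def by blast
        then show "z \<in> A \<union> B" using \<open>z \<in> S\<close> unfolding A_def B_def by blast
      qed
    qed (auto simp: A_def B_def)
    have pA: "\<And>a. a \<in> A \<Longrightarrow> (adj FA)\<^sup>*\<^sup>* x a"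
      using restrict_path[OF RS xS] unfolding FA_def A_def by blast
    have pB: "\<And>a. a \<in> B \<Longrightarrow> (adj FB)\<^sup>*\<^sup>* y a"
      using restrict_path[OF RS yS] unfolding FB_def B_def by blast
    have cA: "\<forall>a\<in>A. \<forall>b\<in>A. (adj FA)\<^sup>*\<^sup>* a b"
    proof (intro ballI)
      fix a b assume "a \<in> A" "b \<in> A"
      then show "(adj FA)\<^sup>*\<^sup>* a b" using rt_sym[OF pA[of a]] pA[of b] rtranclp_trans[of "adj FA" a x b] by blast
    qed
    have cB: "\<forall>a\<in>B. \<forall>b\<in>B. (adj FB)\<^sup>*\<^sup>* a b"
    proof (intro ballI)
      fix a b assume "a \<in> B" "b \<in> B"
      then show "(adj FB)\<^sup>*\<^sup>* a b" using rt_sym[OF pB[of a]] pB[of b] rtranclp_trans[of "adj FB" a y b] by blast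
    qed
    have finA: "finite A" "finite B" using less.prems(1) A_def B_def by auto
    have finR: "finite R" using RF finF finite_subset by auto
    have FAR: "FA \<subseteq> R" and FBR: "FB \<subseteq> R" using FA_def FB_def by auto
    have cFA: "card FA \<le> card R" using card_mono[OF finR FAR] .
    have cFB: "card FB \<le> card R" using card_mono[OF finR FBR] .
    have IA: "card A \<le> card FA + 1"
      using less.hyps[of FA A] finA cA FA_def cFA cR by auto
    have IB: "card B \<le> card FB + 1"
      using less.hyps[of FB B] finA cB FB_def cFB cR by auto
    show ?thesis
    proof (cases "A \<inter> B = {}")
      case True
      then have "FA \<inter> FB = {}" using FA_def FB_def by auto
      moreover have "FA \<union> FB \<subseteq> R" using FA_def FB_def by auto
      moreover have "finite FA" "finite FB" using finR FAR FBR finite_subset by auto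
      ultimately have "card FA + card FB \<le> card R"
        using finR card_Un_disjoint[of FA FB] card_mono[of R "FA \<union> FB"] by simp
      moreover have "card S = card A + card B" using SAB True finA
        by (simp add: card_Un_disjoint)
      ultimately show ?thesis using IA IB cR by linarith
    next
      case False
      then obtain z where z: "z \<in> A" "z \<in> B" by auto
      then have "(adj R)\<^sup>*\<^sup>* x z" "(adj R)\<^sup>*\<^sup>* y z" unfolding A_def B_def by auto
      then have "(adj R)\<^sup>*\<^sup>* x y" using rt_sym[of R y z] rtranclp_trans by metis
      then have "B \<subseteq> A" unfolding A_def B_def by (auto intro: rtranclp_trans)
      then have "S = A" using SAB by auto
      then show ?thesis using IA cR cFA by simp
    qed
  qed
qed


definition tree :: "'v set \<Rightarrow> ('v \<times> 'v) set \<Rightarrow> bool" where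
  "tree V E \<longleftrightarrow> finite V \<and> E \<subseteq> V \<times> V \<and> (\<forall>x\<in>V. \<forall>y\<in>V. (adj E)\<^sup>*\<^sup>* x y) \<and> card E + 1 = card V"

definition Rm :: "('v \<times> 'v) set \<Rightarrow> 'v \<Rightarrow> 'v \<Rightarrow> ('v \<times> 'v) set" where
  "Rm E x y = E - {(x,y),(y,x)}"

definition Nb :: "('v \<times> 'v) set \<Rightarrow> 'v \<Rightarrow> 'v set" where
  "Nb E x = {z. adj E x z}"

lemma Rm_sym: "Rm E x y = Rm E y x" by (auto simp: Rm_def)

lemma adj_in: "tree V E \<Longrightarrow> adj E x y \<Longrightarrow> x \<in> V \<and> y \<in> V"
  by (auto simp: tree_def adj_def)

lemma cut_cover:
  assumes t: "tree V E" and a: "adj E x y" and z: "z \<in> V"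
  shows "z \<in> comp V (Rm E x y) x \<or> z \<in> comp V (Rm E x y) y"
proof -
  have "x \<in> V" using adj_in[OF t a] by simp
  then have "(adj E)\<^sup>*\<^sup>* x z" using t z by (auto simp: tree_def)
  then show ?thesis using split_path[of E x z y] z by (auto simp: comp_def Rm_def)
qed

lemma cut_sep:
  assumes t: "tree V E" and a: "adj E x y"
  shows "y \<notin> comp V (Rm E x y) x"
proof
  assume "y \<in> comp V (Rm E x y) x"
  then have xy: "(adj (Rm E x y))\<^sup>*\<^sup>* x y" by (simp add: comp_def)
  have all: "\<forall>z\<in>V. (adj (Rm E x y))\<^sup>*\<^sup>* x z"
    using cut_cover[OF t a] xy by (auto simp: comp_def intro: rtranclp_trans)
  have con: "\<forall>u\<in>V. \<forall>v\<in>V. (adj (Rm E x y))\<^sup>*\<^sup>* u v"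
    using all rt_sym by (meson rtranclp_trans)
  have fV: "finite V" and EV: "E \<subseteq> V \<times> V" and cE: "card E + 1 = card V"
    using t by (auto simp: tree_def)
  have finE: "finite E" using fV EV by (meson finite_SigmaI finite_subset)
  have RV: "Rm E x y \<subseteq> V \<times> V" using EV by (auto simp: Rm_def)
  have "Rm E x y \<subset> E" using a by (auto simp: Rm_def adj_def)
  then have "card (Rm E x y) < card E" using finE psubset_card_mono by blast
  moreover have "card V \<le> card (Rm E x y) + 1" using conn_card[OF fV RV con] .
  ultimately show False using cE by linarith
qed

lemma neq: "tree V E \<Longrightarrow> adj E x y \<Longrightarrow> x \<noteq> y"
  using cut_sep[of V E x y] adj_in[of V E x y] by (auto simp: comp_def)

lemma adj_Rm: "adj E x z \<Longrightarrow> x \<noteq> z \<Longrightarrow> {x,z} \<noteq> {p,q} \<Longrightarrow> adj (Rm E p q) x z"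
  by (auto simp: adj_def Rm_def doubleton_eq_iff)

lemma sep': assumes "tree V E" "adj E x z" shows "\<not> (adj (Rm E z x))\<^sup>*\<^sup>* z x"
proof -
  have "adj E z x" using assms(2) adj_sym by metis
  then show ?thesis using cut_sep[of V E z x] adj_in[of V E x z] assms by (auto simp: comp_def)
qed

lemma loc_sub:
  assumes t: "tree V E" and a: "adj E x y" and z: "z \<in> Nb E x" "z \<noteq> y"
  shows "comp V (Rm E z x) z \<subseteq> comp V (Rm E x y) x"
proof
  fix u assume u: "u \<in> comp V (Rm E z x) z"
  then have uV: "u \<in> V" and p: "(adj (Rm E z x))\<^sup>*\<^sup>* z u" by (auto simp: comp_def)
  have xz: "adj E x z" using z by (simp add: Nb_def)
  have nxy: "x \<noteq> y" using neq[OF t a] .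
  have nxz: "x \<noteq> z" using neq[OF t xz] .
  have s: "\<not> (adj (Rm E z x))\<^sup>*\<^sup>* z x" using sep'[OF t xz] .
  have yx0: "adj E y x" using a adj_sym by metis
  have yx: "adj (Rm E z x) y x" using adj_Rm[of E y x z x] yx0 nxy z(2)
    by (simp add: doubleton_eq_iff)
  from avoid_path[OF p, of x y] show "u \<in> comp V (Rm E x y) x"
  proof (elim disjE)
    assume h: "(adj (Rm E z x - {(x, y), (y, x)}))\<^sup>*\<^sup>* z u"
    have "Rm E z x - {(x, y), (y, x)} \<subseteq> Rm E x y" by (auto simp: Rm_def)
    then have "(adj (Rm E x y))\<^sup>*\<^sup>* z u" by (rule rt_mono[OF _ h])
    moreover have "adj (Rm E x y) x z" using adj_Rm[of E x z x y] xz nxz z(2)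
      by (simp add: doubleton_eq_iff)
    ultimately have "(adj (Rm E x y))\<^sup>*\<^sup>* x u" by (meson converse_rtranclp_into_rtranclp)
    then show ?thesis using uV by (simp add: comp_def)
  next
    assume "(adj (Rm E z x))\<^sup>*\<^sup>* z x" then show ?thesis using s by simp
  next
    assume "(adj (Rm E z x))\<^sup>*\<^sup>* z y" then show ?thesis using s yx
      by (meson rtranclp.rtrancl_into_rtrancl)
  qed
qed

lemma loc_disj:
  assumes t: "tree V E" and z: "z1 \<in> Nb E x" "z2 \<in> Nb E x" "z1 \<noteq> z2"
  shows "comp V (Rm E z1 x) z1 \<inter> comp V (Rm E z2 x) z2 = {}"
proof (rule ccontr)
  assume "comp V (Rm E z1 x) z1 \<inter> comp V (Rm E z2 x) z2 \<noteq> {}"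
  then obtain u where p1: "(adj (Rm E z1 x))\<^sup>*\<^sup>* z1 u" and p2: "(adj (Rm E z2 x))\<^sup>*\<^sup>* z2 u"
    by (auto simp: comp_def)
  have xz1: "adj E x z1" and xz2: "adj E x z2" using z by (auto simp: Nb_def)
  have n1: "x \<noteq> z1" using neq[OF t xz1] .
  have n2: "x \<noteq> z2" using neq[OF t xz2] .
  have s1: "\<not> (adj (Rm E z1 x))\<^sup>*\<^sup>* z1 x" using sep'[OF t xz1] .
  have s2: "\<not> (adj (Rm E z2 x))\<^sup>*\<^sup>* z2 x" using sep'[OF t xz2] .
  have z2x: "adj E z2 x" using xz2 adj_sym by metis
  have z1x: "adj E z1 x" using xz1 adj_sym by metis
  have e1: "adj (Rm E z1 x) z2 x" using adj_Rm[of E z2 x z1 x] z2x n2 z(3)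
    by (simp add: doubleton_eq_iff)
  have e2: "adj (Rm E z2 x) z1 x" using adj_Rm[of E z1 x z2 x] z1x n1 z(3)
    by (simp add: doubleton_eq_iff)
  from avoid_path[OF p2, of x z1] show False
  proof (elim disjE)
    assume h: "(adj (Rm E z2 x - {(x, z1), (z1, x)}))\<^sup>*\<^sup>* z2 u"
    have "Rm E z2 x - {(x, z1), (z1, x)} \<subseteq> Rm E z1 x" by (auto simp: Rm_def)
    then have "(adj (Rm E z1 x))\<^sup>*\<^sup>* z2 u" by (rule rt_mono[OF _ h])
    then have "(adj (Rm E z1 x))\<^sup>*\<^sup>* u z2" by (rule rt_sym)
    then have "(adj (Rm E z1 x))\<^sup>*\<^sup>* z1 x" using p1 e1
      by (meson rtranclp.rtrancl_into_rtrancl rtranclp_trans)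
    then show False using s1 by simp
  next
    assume "(adj (Rm E z2 x))\<^sup>*\<^sup>* z2 x" then show False using s2 by simp
  next
    assume "(adj (Rm E z2 x))\<^sup>*\<^sup>* z2 z1" then show False using s2 e2
      by (meson rtranclp.rtrancl_into_rtrancl)
  qed
qed

lemma loc_cover:
  assumes t: "tree V E" and a: "adj E x y"
  shows "comp V (Rm E x y) x \<subseteq> insert x (\<Union>z\<in>Nb E x - {y}. comp V (Rm E z x) z)"
proof
  fix u assume "u \<in> comp V (Rm E x y) x"
  then have p: "(adj (Rm E x y))\<^sup>*\<^sup>* x u" by (simp add: comp_def)
  have EV: "E \<subseteq> V \<times> V" using t by (simp add: tree_def)
  from p show "u \<in> insert x (\<Union>z\<in>Nb E x - {y}. comp V (Rm E z x) z)"
  proof (induction rule: rtranclp_induct)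
    case base then show ?case by simp
  next
    case (step u v)
    have vE: "adj E u v" using step.hyps(2) by (auto simp: adj_def Rm_def)
    have vV: "v \<in> V" using adj_in[OF t vE] by simp
    show ?case
    proof (cases "u = x")
      case True
      then have "v \<noteq> y" using step.hyps(2) by (auto simp: adj_def Rm_def)
      moreover have "v \<in> Nb E x" using vE True by (simp add: Nb_def)
      moreover have "v \<in> comp V (Rm E v x) v" using vV by (simp add: comp_def)
      ultimately show ?thesis by blast
    next
      case False
      then obtain z where z: "z \<in> Nb E x - {y}" "u \<in> comp V (Rm E z x) z" using step.IH by auto
      show ?thesis
      proof (cases "adj (Rm E z x) u v")
        case True
        then have "v \<in> comp V (Rm E z x) z" using z(2) vV
          by (auto simp: comp_def intro: rtranclp.rtrancl_into_rtrancl)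
        then show ?thesis using z(1) by blast
      next
        case c: False
        have "x \<notin> comp V (Rm E z x) z" using sep'[of V E x z] t z(1)
          by (auto simp: comp_def Nb_def)
        then have "u \<noteq> x" using z(2) by auto
        then have "v = x" using c step.hyps(2) by (auto simp: adj_def Rm_def)
        then show ?thesis by simp
      qed
    qed
  qed
qed

lemma loc_eq:
  assumes t: "tree V E" and a: "adj E x y"
  shows "comp V (Rm E x y) x = insert x (\<Union>z\<in>Nb E x - {y}. comp V (Rm E z x) z)"
proof
  show "comp V (Rm E x y) x \<subseteq> insert x (\<Union>z\<in>Nb E x - {y}. comp V (Rm E z x) z)"
    using loc_cover[OF t a] .
  have "x \<in> comp V (Rm E x y) x" using adj_in[OF t a] by (simp add: comp_def)
  then show "insert x (\<Union>z\<in>Nb E x - {y}. comp V (Rm E z x) z) \<subseteq> comp V (Rm E x y) x"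
    using loc_sub[OF t a] by blast
qed

lemma finN: "tree V E \<Longrightarrow> finite (Nb E x)"
proof -
  assume t: "tree V E"
  have "Nb E x \<subseteq> V" using adj_in[OF t] by (auto simp: Nb_def)
  then show ?thesis using t finite_subset by (auto simp: tree_def)
qed

lemma finC: "tree V E \<Longrightarrow> finite (comp V F x)"
  by (auto simp: tree_def comp_def)

lemma x_notin: "tree V E \<Longrightarrow> z \<in> Nb E x \<Longrightarrow> x \<notin> comp V (Rm E z x) z"
  using sep'[of V E x z] by (auto simp: comp_def Nb_def)

lemma loc_charge:
  assumes t: "tree V E" and a: "adj E x y"
  shows "charge black pend (comp V (Rm E x y) x) =
     vcharge black pend x + (\<Sum>z\<in>Nb E x - {y}. charge black pend (comp V (Rm E z x) z))"
proof -
  let ?I = "Nb E x - {y}"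
  let ?A = "\<lambda>z. comp V (Rm E z x) z"
  have fI: "finite ?I" using finN[OF t] by simp
  have fA: "\<forall>z\<in>?I. finite (?A z)" using finC[OF t] by simp
  have dA: "\<forall>i\<in>?I. \<forall>j\<in>?I. i \<noteq> j \<longrightarrow> ?A i \<inter> ?A j = {}" using loc_disj[OF t] by blast
  have nx: "x \<notin> (\<Union>z\<in>?I. ?A z)" using x_notin[OF t] by blast
  have fU: "finite (\<Union>z\<in>?I. ?A z)" using fI fA by blast
  have "charge black pend (comp V (Rm E x y) x) = vcharge black pend x + sum (vcharge black pend) (\<Union>z\<in>?I. ?A z)"
    unfolding charge_def loc_eq[OF t a] using nx fU by simp
  also have "sum (vcharge black pend) (\<Union>z\<in>?I. ?A z) = (\<Sum>z\<in>?I. sum (vcharge black pend) (?A z))"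
    using sum.UNION_disjoint[OF fI fA dA] .
  finally show ?thesis unfolding charge_def .
qed

lemma card_sub:
  assumes t: "tree V E" and a: "adj E x y" and z: "z \<in> Nb E x" "z \<noteq> y"
  shows "card (comp V (Rm E z x) z) < card (comp V (Rm E x y) x)"
proof -
  have "x \<in> comp V (Rm E x y) x" using adj_in[OF t a] by (simp add: comp_def)
  then have "comp V (Rm E z x) z \<subset> comp V (Rm E x y) x"
    using loc_sub[OF t a z] x_notin[OF t z(1)] by blast
  then show ?thesis using finC[OF t] psubset_card_mono by blast
qed

lemma Q_sum:
  assumes t: "tree V E" and a: "adj E x y"
  shows "charge black pend (comp V (Rm E x y) x) + charge black pend (comp V (Rm E y x) y) = charge black pend V"
proof -
  have U: "V = comp V (Rm E x y) x \<union> comp V (Rm E x y) y"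
    using cut_cover[OF t a] by (auto simp: comp_def)
  have D: "comp V (Rm E x y) x \<inter> comp V (Rm E x y) y = {}"
  proof (rule ccontr)
    assume "comp V (Rm E x y) x \<inter> comp V (Rm E x y) y \<noteq> {}"
    then obtain u where u1: "(adj (Rm E x y))\<^sup>*\<^sup>* x u" and u2: "(adj (Rm E x y))\<^sup>*\<^sup>* y u" by (auto simp: comp_def)
    have "(adj (Rm E x y))\<^sup>*\<^sup>* x y" using rtranclp_trans[OF u1 rt_sym[OF u2]] .
    then show False using cut_sep[OF t a] adj_in[OF t a] by (simp add: comp_def)
  qed
  have "charge black pend V = charge black pend (comp V (Rm E x y) x) + charge black pend (comp V (Rm E x y) y)"
    unfolding charge_def using sum.union_disjoint[OF finC[OF t] finC[OF t] D] U by simp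
  then show ?thesis using Rm_sym by metis
qed


lemma sum3:
  fixes f :: "'a \<Rightarrow> int"
  assumes "finite S" "\<forall>z\<in>S. \<exists>k. f z = 3*k + c"
  shows "\<exists>K. sum f S = 3*K + c * int (card S)"
  using assms
proof (induction S rule: finite_induct)
  case empty then show ?case by simp
next
  case (insert a F)
  obtain K where K: "sum f F = 3*K + c * int (card F)" using insert by auto
  obtain k where k: "f a = 3*k + c" using insert by auto
  have "sum f (insert a F) = 3*(k+K) + c * int (card (insert a F))"
    using insert.hyps K k by (simp add: algebra_simps)
  then show ?case by blast
qed

lemma card_cases:
  assumes "finite S" "card S + p = (2::nat)"
  shows "(S = {} \<and> p = 2) \<or> (\<exists>a. S = {a} \<and> p = 1) \<or> (\<exists>a c. a \<noteq> c \<and> S = {a,c} \<and> p = 0)"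
proof -
  have "card S = 0 \<or> card S = 1 \<or> card S = 2" using assms(2) by linarith
  then show ?thesis
  proof (elim disjE)
    assume "card S = 0" then show ?thesis using assms by simp
  next
    assume "card S = 1" then show ?thesis using assms by (auto simp: card_1_singleton_iff)
  next
    assume "card S = 2"
    then obtain a c where "S = {a,c}" "a \<noteq> c" by (auto simp: card_2_iff)
    moreover have "p = 0" using assms(2) \<open>card S = 2\<close> by simp
    ultimately show ?thesis by blast
  qed
qed

context
  fixes V :: "'v set" and E :: "('v \<times> 'v) set" and black occ :: "'v \<Rightarrow> bool"
    and pend :: "'v \<Rightarrow> nat"
  assumes adm: "admissible V E black pend occ"
begin

definition Q :: "'v \<Rightarrow> 'v \<Rightarrow> int" where
  "Q x y = charge black pend (comp V (Rm E x y) x)"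

lemma bt: "blossom_tree V E black pend" using adm by (simp add: admissible_def)

lemma tr: "tree V E" using bt unfolding blossom_tree_def tree_def by auto

lemma Ecol: "(w,b) \<in> E \<Longrightarrow> \<not> black w \<and> black b \<and> w \<in> V \<and> b \<in> V"
  using bt unfolding blossom_tree_def by auto

lemma adj_col: "adj E x y \<Longrightarrow> black x \<noteq> black y"
  using Ecol unfolding adj_def by auto

lemma adjE: "(w,b) \<in> E \<Longrightarrow> adj E w b" "(w,b) \<in> E \<Longrightarrow> adj E b w"
  by (auto simp: adj_def)

lemma wN: "(w,b) \<in> E \<Longrightarrow> z \<in> Nb E w \<Longrightarrow> (w,z) \<in> E"
  using Ecol by (auto simp: Nb_def adj_def)

lemma bN: "(w,b) \<in> E \<Longrightarrow> z \<in> Nb E b \<Longrightarrow> (z,b) \<in> E"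
  using Ecol by (auto simp: Nb_def adj_def)

lemma degN: assumes "x \<in> V" shows "card (Nb E x) + pend x = 3"
proof -
  have deg: "card {e\<in>E. fst e = x \<or> snd e = x} + pend x = 3" using bt assms
    unfolding blossom_tree_def by blast
  show ?thesis
  proof (cases "black x")
    case True
    have seq: "{e\<in>E. fst e = x \<or> snd e = x} = (\<lambda>z. (z,x)) ` Nb E x"
    proof (intro set_eqI iffI)
      fix e assume "e \<in> {e\<in>E. fst e = x \<or> snd e = x}"
      then obtain a c where e: "e = (a,c)" "(a,c) \<in> E" "a = x \<or> c = x" by (cases e) auto
      then have "c = x" using Ecol[of a c] True by auto
      then show "e \<in> (\<lambda>z. (z,x)) ` Nb E x" using e by (auto simp: Nb_def adj_def)
    next
      fix e assume "e \<in> (\<lambda>z. (z,x)) ` Nb E x"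
      then obtain z where z: "e = (z,x)" "adj E x z" by (auto simp: Nb_def)
      then have "(z,x) \<in> E" using Ecol[of x z] True by (auto simp: adj_def)
      then show "e \<in> {e\<in>E. fst e = x \<or> snd e = x}" using z by simp
    qed
    have inj: "inj_on (\<lambda>z. (z,x)) (Nb E x)" by (auto simp: inj_on_def)
    have "card {e\<in>E. fst e = x \<or> snd e = x} = card (Nb E x)" unfolding seq using card_image[OF inj] .
    then show ?thesis using deg by simp
  next
    case False
    have seq: "{e\<in>E. fst e = x \<or> snd e = x} = Pair x ` Nb E x"
    proof (intro set_eqI iffI)
      fix e assume "e \<in> {e\<in>E. fst e = x \<or> snd e = x}"
      then obtain a c where e: "e = (a,c)" "(a,c) \<in> E" "a = x \<or> c = x" by (cases e) auto
      then have "a = x" using Ecol[of a c] False by auto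
      then show "e \<in> Pair x ` Nb E x" using e by (auto simp: Nb_def adj_def)
    next
      fix e assume "e \<in> Pair x ` Nb E x"
      then obtain z where z: "e = (x,z)" "adj E x z" by (auto simp: Nb_def)
      then have "(x,z) \<in> E" using Ecol[of z x] False by (auto simp: adj_def)
      then show "e \<in> {e\<in>E. fst e = x \<or> snd e = x}" using z by simp
    qed
    have inj: "inj_on (Pair x) (Nb E x)" by (auto simp: inj_on_def)
    have "card {e\<in>E. fst e = x \<or> snd e = x} = card (Nb E x)" unfolding seq using card_image[OF inj] .
    then show ?thesis using deg by simp
  qed
qed

lemma cardS: assumes "adj E x y" shows "card (Nb E x - {y}) + pend x = 2"
proof -
  have xV: "x \<in> V" using adj_in[OF tr assms] by simp
  have "y \<in> Nb E x" using assms by (simp add: Nb_def)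
  moreover have "finite (Nb E x)" using finN[OF tr] .
  moreover have "card (Nb E x) > 0" using calculation by (auto simp: card_gt_0_iff)
  ultimately have "card (Nb E x - {y}) + 1 = card (Nb E x)"
    by (simp add: card_Diff_singleton)
  then show ?thesis using degN[OF xV] by linarith
qed

lemma finS: "finite (Nb E x - {y})" using finN[OF tr] by simp

lemma qw: "(w,b) \<in> E \<Longrightarrow> q_white V E black pend (w,b) = Q w b"
proof -
  assume h: "(w,b) \<in> E"
  then have "(b,w) \<notin> E" using Ecol[of w b] Ecol[of b w] by auto
  then have "E - {(w,b)} = Rm E w b" by (auto simp: Rm_def)
  then show ?thesis by (simp add: q_white_def Q_def)
qed

lemma qb: "(w,b) \<in> E \<Longrightarrow> q_black V E black pend (w,b) = Q b w"
proof -
  assume h: "(w,b) \<in> E"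
  then have "(b,w) \<notin> E" using Ecol[of w b] Ecol[of b w] by auto
  then have "E - {(w,b)} = Rm E b w" by (auto simp: Rm_def)
  then show ?thesis by (simp add: q_black_def Q_def)
qed

lemma Qsum: "adj E x y \<Longrightarrow> Q x y + Q y x = 3"
  using Q_sum[OF tr, of x y black pend] bt unfolding Q_def blossom_tree_def by simp

lemma Qloc: "adj E x y \<Longrightarrow> Q x y = vcharge black pend x + (\<Sum>z\<in>Nb E x - {y}. Q z x)"
  using loc_charge[OF tr, of x y black pend] unfolding Q_def by simp

lemma HPreg: assumes "(w,b) \<in> E" "\<not> (occ w \<and> occ b)" shows "Q w b \<ge> 2"
proof -
  have "HP occ (w,b)" using assms(2) by (simp add: HP_def NHP_def)
  then have "regular V E black pend (w,b)" using adm assms(1) by (auto simp: admissible_def)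
  then have "Q b w \<le> 1" using qb[OF assms(1)] by (simp add: regular_def)
  then show ?thesis using Qsum[OF adjE(1)[OF assms(1)]] by linarith
qed

lemma NHPnr: assumes "(w,b) \<in> E" "occ w" "occ b" shows "Q w b \<le> 1"
proof -
  have "NHP occ (w,b)" using assms by (simp add: NHP_def)
  then have "\<not> regular V E black pend (w,b)" using adm assms(1) by (auto simp: admissible_def)
  then have "\<not> (Q w b \<ge> 0 \<and> Q b w \<le> 1)" using qb[OF assms(1)] qw[OF assms(1)] by (simp add: regular_def)
  then show ?thesis using Qsum[OF adjE(1)[OF assms(1)]] by linarith
qed

lemma mod3: "adj E x y \<Longrightarrow> \<exists>k. Q x y = 3*k + (if black x then 1 else 2)"
proof (induction "card (comp V (Rm E x y) x)" arbitrary: x y rule: less_induct)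
  case less
  let ?S = "Nb E x - {y}"
  have IH: "\<forall>z\<in>?S. \<exists>k. Q z x = 3*k + (if black x then 2 else 1)"
  proof
    fix z assume z: "z \<in> ?S"
    then have zx: "adj E z x" using adj_sym by (metis Nb_def DiffD1 mem_Collect_eq)
    have "card (comp V (Rm E z x) z) < card (comp V (Rm E x y) x)"
      using card_sub[OF tr less.prems] z by blast
    then obtain k where "Q z x = 3*k + (if black z then 1 else 2)" using less.hyps zx by blast
    moreover have "black z \<noteq> black x" using adj_col[OF zx] .
    ultimately show "\<exists>k. Q z x = 3*k + (if black x then 2 else 1)" by (cases "black x") auto
  qed
  obtain K where K: "(\<Sum>z\<in>?S. Q z x) = 3*K + (if black x then 2 else 1) * int (card ?S)"
    using sum3[OF finS IH] by blast
  have cs: "int (card ?S) = 2 - int (pend x)" using cardS[OF less.prems] by linarith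
  have ql: "Q x y = vcharge black pend x + (\<Sum>z\<in>?S. Q z x)" using Qloc[OF less.prems] .
  show ?case
  proof (cases "black x")
    case True
    then have "Q x y = 3*(K + 1 - int (pend x)) + 1" using ql K cs by (simp add: vcharge_def algebra_simps)
    then show ?thesis using True by (intro exI[of _ "K + 1 - int (pend x)"]) simp
  next
    case False
    then have "Q x y = 3*K + 2" using ql K cs by (simp add: vcharge_def algebra_simps)
    then show ?thesis using False by auto
  qed
qed

lemma NHPq: assumes "(w,b) \<in> E" "occ w" "occ b" shows "Q w b \<le> -1"
proof -
  have "Q w b \<le> 1" using NHPnr[OF assms] .
  moreover obtain k where "Q w b = 3*k + 2" using mod3[OF adjE(1)[OF assms(1)]] Ecol[OF assms(1)] by auto
  ultimately have "k < 0" by linarith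
  then have "k \<le> -1" by linarith
  then show ?thesis using \<open>Q w b = 3*k + 2\<close> by linarith
qed

lemma LI: assumes "(w,b) \<in> E" "\<not> occ w" shows "Q w b = 2"
proof -
  let ?S = "Nb E w - {b}"
  have ge: "Q w b \<ge> 2" using HPreg[OF assms(1)] assms(2) by simp
  have each: "\<forall>z\<in>?S. Q z w \<le> 1"
  proof
    fix z assume "z \<in> ?S"
    then have wz: "(w,z) \<in> E" using wN[OF assms(1)] by blast
    have "Q w z \<ge> 2" using HPreg[OF wz] assms(2) by simp
    then show "Q z w \<le> 1" using Qsum[OF adjE(1)[OF wz]] by linarith
  qed
  have "(\<Sum>z\<in>?S. Q z w) \<le> of_nat (card ?S) * 1" using sum_bounded_above[of ?S "\<lambda>z. Q z w" 1] each by blast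
  moreover have "Q w b = int (pend w) + (\<Sum>z\<in>?S. Q z w)"
    using Qloc[OF adjE(1)[OF assms(1)]] Ecol[OF assms(1)] by (simp add: vcharge_def)
  moreover have "card ?S + pend w = 2" using cardS[OF adjE(1)[OF assms(1)]] .
  ultimately show ?thesis using ge by linarith
qed

lemma LA: assumes "(w,b) \<in> E" "occ w" "occ b"
  shows "Q w b = -1 \<and> Q b w = 4 \<and> pend b = 0 \<and> (\<forall>z\<in>Nb E b - {w}. \<not> occ z)"
proof -
  let ?S = "Nb E b - {w}"
  have le: "Q w b \<le> -1" using NHPq[OF assms] .
  have sm: "Q w b + Q b w = 3" using Qsum[OF adjE(1)[OF assms(1)]] .
  have each: "\<forall>z\<in>?S. Q z b \<le> 2 \<and> (occ z \<longrightarrow> Q z b \<le> -1)"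
  proof
    fix z assume "z \<in> ?S"
    then have zb: "(z,b) \<in> E" using bN[OF assms(1)] by blast
    show "Q z b \<le> 2 \<and> (occ z \<longrightarrow> Q z b \<le> -1)"
    proof (cases "occ z")
      case True then show ?thesis using NHPq[OF zb True assms(3)] by simp
    next
      case False then show ?thesis using LI[OF zb False] by simp
    qed
  qed
  have ql: "Q b w = - int (pend b) + (\<Sum>z\<in>?S. Q z b)"
    using Qloc[OF adjE(2)[OF assms(1)]] Ecol[OF assms(1)] by (simp add: vcharge_def)
  from card_cases[OF finS cardS[OF adjE(2)[OF assms(1)]]] show ?thesis
  proof (elim disjE exE conjE)
    assume e: "?S = {}" and "pend b = 2"
    have "(\<Sum>z\<in>?S. Q z b) = 0" by (simp only: e sum.empty)
    then show ?thesis using ql le sm \<open>pend b = 2\<close> by simp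
  next
    fix a assume a: "?S = {a}" "pend b = 1"
    then show ?thesis using ql le sm each by auto
  next
    fix a c assume ac: "a \<noteq> c" "?S = {a,c}" "pend b = 0"
    then have "Q b w = Q a b + Q c b" using ql by simp
    moreover have "Q a b \<le> 2 \<and> (occ a \<longrightarrow> Q a b \<le> -1)" "Q c b \<le> 2 \<and> (occ c \<longrightarrow> Q c b \<le> -1)"
      using each ac by auto
    ultimately show ?thesis using le sm ac by auto
  qed
qed

lemma LB: assumes "(w,b) \<in> E" "\<not> occ b"
  shows "(pend b = 1 \<and> Q b w = 1) \<or> (pend b = 2 \<and> Q b w = -2)"
proof -
  let ?S = "Nb E b - {w}"
  have "Q w b \<ge> 2" using HPreg[OF assms(1)] assms(2) by simp
  then have le: "Q b w \<le> 1" using Qsum[OF adjE(1)[OF assms(1)]] by linarith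
  have each: "\<forall>z\<in>?S. Q z b \<ge> 2"
  proof
    fix z assume "z \<in> ?S"
    then have zb: "(z,b) \<in> E" using bN[OF assms(1)] by blast
    show "Q z b \<ge> 2" using HPreg[OF zb] assms(2) by simp
  qed
  have ql: "Q b w = - int (pend b) + (\<Sum>z\<in>?S. Q z b)"
    using Qloc[OF adjE(2)[OF assms(1)]] Ecol[OF assms(1)] by (simp add: vcharge_def)
  from card_cases[OF finS cardS[OF adjE(2)[OF assms(1)]]] show ?thesis
  proof (elim disjE exE conjE)
    assume e: "?S = {}" and "pend b = 2"
    have "(\<Sum>z\<in>?S. Q z b) = 0" by (simp only: e sum.empty)
    then show ?thesis using ql \<open>pend b = 2\<close> by simp
  next
    fix a assume a: "?S = {a}" "pend b = 1"
    then show ?thesis using ql le each by auto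
  next
    fix a c assume ac: "a \<noteq> c" "?S = {a,c}" "pend b = 0"
    then have "Q b w = Q a b + Q c b" using ql by simp
    moreover have "Q a b \<ge> 2" "Q c b \<ge> 2" using each ac by auto
    ultimately show ?thesis using le by linarith
  qed
qed

lemma LW: assumes "(w,z) \<in> E" "occ w"
  shows "(occ z \<and> Q z w = 4) \<or> (\<not> occ z \<and> Q z w = 1) \<or> (\<not> occ z \<and> pend z = 2 \<and> Q z w = -2)"
proof (cases "occ z")
  case True then show ?thesis using LA[OF assms True] by simp
next
  case False then show ?thesis using LB[OF assms(1) False] by auto
qed

lemma NHPset: assumes "(w,b) \<in> E" "occ w" "\<not> occ b"
  shows "{e\<in>E. fst e = w \<and> NHP occ e} = Pair w ` {z \<in> Nb E w - {b}. occ z}"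
proof (intro set_eqI iffI)
  fix e assume "e \<in> {e\<in>E. fst e = w \<and> NHP occ e}"
  then obtain z where e: "e = (w,z)" "(w,z) \<in> E" "occ z" by (cases e) (auto simp: NHP_def)
  then have "z \<noteq> b" using assms(3) by auto
  moreover have "z \<in> Nb E w" using e by (simp add: Nb_def adj_def)
  ultimately show "e \<in> Pair w ` {z \<in> Nb E w - {b}. occ z}" using e by auto
next
  fix e assume "e \<in> Pair w ` {z \<in> Nb E w - {b}. occ z}"
  then obtain z where z: "e = (w,z)" "z \<in> Nb E w" "occ z" by auto
  then have "(w,z) \<in> E" using wN[OF assms(1)] by blast
  then show "e \<in> {e\<in>E. fst e = w \<and> NHP occ e}" using z assms(2) by (simp add: NHP_def)
qed

lemma part1: assumes "(w,b) \<in> E" "\<not> occ w"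
  shows "q_white V E black pend (w, b) = 2 \<and> q_black V E black pend (w, b) = 1"
  using LI[OF assms] Qsum[OF adjE(1)[OF assms(1)]] qw[OF assms(1)] qb[OF assms(1)] by simp

lemma part2: assumes e: "(w,b) \<in> E" and n: "NHP occ (w, b)"
  shows "q_white V E black pend (w, b) = -1 \<and> q_black V E black pend (w, b) = 4 \<and>
        pend b = 0 \<and> (\<forall>w'. (w', b) \<in> E \<and> w' \<noteq> w \<longrightarrow> \<not> occ w') \<and>
        (\<exists>b1. (w, b1) \<in> E \<and> b1 \<noteq> b \<and> \<not> occ b1 \<and> pend b1 = 2 \<and>
           (pend w = 1 \<or> (\<exists>b2. (w, b2) \<in> E \<and> b2 \<noteq> b \<and> b2 \<noteq> b1 \<and> \<not> occ b2)))"
proof -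
  have ow: "occ w" and ob: "occ b" using n by (auto simp: NHP_def)
  note A = LA[OF e ow ob]
  have p4: "\<forall>w'. (w', b) \<in> E \<and> w' \<noteq> w \<longrightarrow> \<not> occ w'"
  proof (intro allI impI)
    fix w' assume h: "(w', b) \<in> E \<and> w' \<noteq> w"
    then have "w' \<in> Nb E b - {w}" by (auto simp: Nb_def adj_def)
    then show "\<not> occ w'" using A by blast
  qed
  let ?S = "Nb E w - {b}"
  have ql: "Q w b = int (pend w) + (\<Sum>z\<in>?S. Q z w)"
    using Qloc[OF adjE(1)[OF e]] Ecol[OF e] by (simp add: vcharge_def)
  have W: "\<And>z. z \<in> ?S \<Longrightarrow> (w,z) \<in> E \<and> ((occ z \<and> Q z w = 4) \<or> (\<not> occ z \<and> Q z w = 1) \<or> (\<not> occ z \<and> pend z = 2 \<and> Q z w = -2))"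
  proof -
    fix z assume "z \<in> ?S"
    then have wz: "(w,z) \<in> E" using wN[OF e] by blast
    then show "?thesis z" using LW[OF wz ow] by simp
  qed
  have ex: "\<exists>b1. (w, b1) \<in> E \<and> b1 \<noteq> b \<and> \<not> occ b1 \<and> pend b1 = 2 \<and>
           (pend w = 1 \<or> (\<exists>b2. (w, b2) \<in> E \<and> b2 \<noteq> b \<and> b2 \<noteq> b1 \<and> \<not> occ b2))"
  using card_cases[OF finS cardS[OF adjE(1)[OF e]]]
  proof (elim disjE exE conjE)
    assume es: "?S = {}" and "pend w = 2"
    have "(\<Sum>z\<in>?S. Q z w) = 0" by (simp only: es sum.empty)
    then show ?thesis using ql A \<open>pend w = 2\<close> by simp
  next
    fix a assume a: "?S = {a}" "pend w = 1"
    then have "Q a w = -2" using ql A by simp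
    moreover have "a \<in> ?S" using a by simp
    ultimately have "(w,a) \<in> E" "a \<noteq> b" "\<not> occ a" "pend a = 2" using W[of a] by auto
    then show ?thesis using a(2) by blast
  next
    fix a c assume ac: "a \<noteq> c" "?S = {a,c}" "pend w = 0"
    then have sm: "Q a w + Q c w = -1" using ql A by simp
    have aS: "a \<in> ?S" and cS: "c \<in> ?S" using ac by auto
    note Wa = W[OF aS] and Wc = W[OF cS]
    have "(Q a w = -2 \<and> Q c w = 1) \<or> (Q a w = 1 \<and> Q c w = -2)" using Wa Wc sm by auto
    then show ?thesis
    proof
      assume h: "Q a w = -2 \<and> Q c w = 1"
      then have "(w,a) \<in> E" "a \<noteq> b" "\<not> occ a" "pend a = 2" using Wa aS by auto
      moreover have "(w,c) \<in> E" "c \<noteq> b" "\<not> occ c" using Wc cS h by auto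
      ultimately show ?thesis using ac(1) by blast
    next
      assume h: "Q a w = 1 \<and> Q c w = -2"
      then have "(w,c) \<in> E" "c \<noteq> b" "\<not> occ c" "pend c = 2" using Wc cS by auto
      moreover have "(w,a) \<in> E" "a \<noteq> b" "\<not> occ a" using Wa aS h by auto
      ultimately show ?thesis using ac(1) by blast
    qed
  qed
  show ?thesis using A p4 ex qw[OF e] qb[OF e] by simp
qed

lemma part3: assumes e: "(w,b) \<in> E" and nb: "\<not> occ b" and ow: "occ w"
  shows "(q_white V E black pend (w, b) = 2 \<and> q_black V E black pend (w, b) = 1) \<or>
        (q_white V E black pend (w, b) = 5 \<and> q_black V E black pend (w, b) = -2 \<and>
         pend b = 2 \<and> card {e \<in> E. fst e = w \<and> NHP occ e} = 1)"
proof -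
  have sm: "Q w b + Q b w = 3" using Qsum[OF adjE(1)[OF e]] .
  from LB[OF e nb] show ?thesis
  proof
    assume "pend b = 1 \<and> Q b w = 1"
    then show ?thesis using sm qw[OF e] qb[OF e] by simp
  next
    assume B: "pend b = 2 \<and> Q b w = -2"
    then have q5: "Q w b = 5" using sm by simp
    let ?S = "Nb E w - {b}"
    have ql: "Q w b = int (pend w) + (\<Sum>z\<in>?S. Q z w)"
      using Qloc[OF adjE(1)[OF e]] Ecol[OF e] by (simp add: vcharge_def)
    have W: "\<And>z. z \<in> ?S \<Longrightarrow> (occ z \<and> Q z w = 4) \<or> (\<not> occ z \<and> Q z w = 1) \<or> (\<not> occ z \<and> pend z = 2 \<and> Q z w = -2)"
    proof -
      fix z assume "z \<in> ?S"
      then have wz: "(w,z) \<in> E" using wN[OF e] by blast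
      then show "?thesis z" using LW[OF wz ow] by simp
    qed
    have NS: "{e\<in>E. fst e = w \<and> NHP occ e} = Pair w ` {z \<in> ?S. occ z}" using NHPset[OF e ow nb] .
    have "card {e\<in>E. fst e = w \<and> NHP occ e} = 1"
    using card_cases[OF finS cardS[OF adjE(1)[OF e]]]
    proof (elim disjE exE conjE)
      assume es: "?S = {}" and "pend w = 2"
      have "(\<Sum>z\<in>?S. Q z w) = 0" by (simp only: es sum.empty)
      then show ?thesis using ql q5 \<open>pend w = 2\<close> by simp
    next
      fix a assume a: "?S = {a}" "pend w = 1"
      then have "Q a w = 4" using ql q5 by simp
      then have "occ a" using W[of a] a by auto
      then have "{z \<in> ?S. occ z} = {a}" using a by auto
      then show ?thesis using NS by simp
    next
      fix a c assume ac: "a \<noteq> c" "?S = {a,c}" "pend w = 0"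
      then have s5: "Q a w + Q c w = 5" using ql q5 by simp
      have aS: "a \<in> ?S" and cS: "c \<in> ?S" using ac by auto
      note Wa = W[OF aS] and Wc = W[OF cS]
      have "(occ a \<and> \<not> occ c) \<or> (\<not> occ a \<and> occ c)" using Wa Wc s5 by auto
      then have "{z \<in> ?S. occ z} = {a} \<or> {z \<in> ?S. occ z} = {c}" using ac by auto
      then show ?thesis using NS by auto
    qed
    then show ?thesis using B q5 qw[OF e] qb[OF e] by simp
  qed
qed

end

theorem mainTheorem3:
  fixes V :: "'v set" and E :: "('v \<times> 'v) set" and black occ :: "'v \<Rightarrow> bool"
    and pend :: "'v \<Rightarrow> nat"
  assumes adm: "admissible V E black pend occ"
  shows
   "(\<forall>w b. (w, b) \<in> E \<and> \<not> occ w \<longrightarrow>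
        q_white V E black pend (w, b) = 2 \<and> q_black V E black pend (w, b) = 1)
  \<and> (\<forall>w b. (w, b) \<in> E \<and> NHP occ (w, b) \<longrightarrow>
        q_white V E black pend (w, b) = -1 \<and> q_black V E black pend (w, b) = 4 \<and>
        pend b = 0 \<and> (\<forall>w'. (w', b) \<in> E \<and> w' \<noteq> w \<longrightarrow> \<not> occ w') \<and>
        (\<exists>b1. (w, b1) \<in> E \<and> b1 \<noteq> b \<and> \<not> occ b1 \<and> pend b1 = 2 \<and>
           (pend w = 1 \<or> (\<exists>b2. (w, b2) \<in> E \<and> b2 \<noteq> b \<and> b2 \<noteq> b1 \<and> \<not> occ b2))))
  \<and> (\<forall>w b. (w, b) \<in> E \<and> \<not> occ b \<and> occ w \<longrightarrow>
        (q_white V E black pend (w, b) = 2 \<and> q_black V E black pend (w, b) = 1) \<or>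
        (q_white V E black pend (w, b) = 5 \<and> q_black V E black pend (w, b) = -2 \<and>
         pend b = 2 \<and> card {e \<in> E. fst e = w \<and> NHP occ e} = 1))"
  using part1[OF adm] part2[OF adm] part3[OF adm] by blast

end
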